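(* Let $m$ be any nonzero complex number. Then for every nonnegative integer $n$, \begin{align*} &\sum_{k=0}^n\frac{((256-27m)k^3+384k^2+(176+21m)k-6m+24)\binom{4k}k}{(k+1)m^k} =-6m+\frac{8(2n+1)(4n+1)(4n+3)\binom{4n}n}{(n+1)m^n}, \\&\sum_{k=0}^n\frac{((256-27m)k^3+384k^2+(176+3m)k+24)\binom{4k}k}{(3k+1)m^k} =\frac{8(2n+1)(4n+1)(4n+3)\binom{4n}n}{(3n+1)m^n}, \\&\sum_{k=0}^n\frac{((256-27m)k^3+3(128-9m)k^2+2(88-3m)k+24)\binom{4k}k}{(3k+1)(3k+2)m^k} =\frac{8(2n+1)(4n+1)(4n+3)\binom{4n}n}{(3n+1)(3n+2)m^n}. \end{align*} Consequently, if $|m|>256/27$, then \begin{align*} &\sum_{k=0}^\infty\frac{((256-27m)k^3+384k^2+(176+21m)k-6m+24)\binom{4k}k}{(k+1)m^k}=-6m, \\&\sum_{k=0}^\infty\frac{((256-27m)k^3+384k^2+(176+3m)k+24)\binom{4k}k}{(3k+1)m^k}=0, \\&\sum_{k=0}^\infty\frac{((256-27m)k^3+3(128-9m)k^2+2(88-3m)k+24)\binom{4k}k}{(3k+1)(3k+2)m^k}=0. \end{align*} *)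

theory Defs
  imports Complex_Main
begin

end

theory Submission
  imports Defs
begin

lemma frac:
  fixes K p C d1 M b n d3 d2 m e :: complex
  assumes "d1\<noteq>0" "d2\<noteq>0" "d3\<noteq>0" "m\<noteq>0" "M\<noteq>0" and h: "p*d2*m*d3 + b*n*d1 = e*n*d1"
  shows "K + p*C/(d1*M) + b*(n*C/d3)/(d2*(m*M)) = K + e*(n*C/d3)/(d2*(m*M))"
proof -
  have "p*C/(d1*M) + b*(n*C/d3)/(d2*(m*M)) = (p*d2*m*d3 + b*n*d1) * C / (d1*d2*d3*m*M)"
    using assms(1-5) by (simp add: field_simps)
  also have "\<dots> = (e*n*d1) * C / (d1*d2*d3*m*M)" by (simp only: h)
  also have "\<dots> = e*(n*C/d3)/(d2*(m*M))"
    using assms(1-5) by (simp add: field_simps)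
  finally show ?thesis by (simp add: add.assoc)
qed


lemma binom4_nat:
  "3*(k+1)*(3*k+1)*(3*k+2) * (4*Suc k choose Suc k) = 4*(4*k+1)*(4*k+2)*(4*k+3)*(4*k choose k)"
proof -
  have e4: "4*Suc k = Suc (4*k+3)" by simp
  define A where "A = (Suc (4*k+3) choose Suc k)"
  define B3 where "B3 = (4*k+3 choose k)"
  define B2 where "B2 = (4*k+2 choose k)"
  define B1 where "B1 = (4*k+1 choose k)"
  define B0 where "B0 = (4*k choose k)"
  have a: "(k+1) * A = (4*k+4) * B3"
    using Suc_times_binomial[of k "4*k+3"] unfolding A_def B3_def by simp
  have b: "(3*k+3) * B3 = (4*k+3) * B2"
    using binomial_absorb_comp[of "4*k+3" k] by (simp add: B3_def B2_def)
  have c: "(3*k+2) * B2 = (4*k+2) * B1"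
    using binomial_absorb_comp[of "4*k+2" k] by (simp add: B1_def B2_def)
  have d: "(3*k+1) * B1 = (4*k+1) * B0"
    using binomial_absorb_comp[of "4*k+1" k] by (simp add: B1_def B0_def)
  have "3*(k+1)*(3*k+1)*(3*k+2) * A = 3*(3*k+1)*(3*k+2)*((k+1)*A)" by algebra
  also have "\<dots> = (3*k+1)*(3*k+2)*4*((3*k+3)*B3)" by (simp only: a) (simp add: algebra_simps)
  also have "\<dots> = (3*k+1)*4*(4*k+3)*((3*k+2)*B2)" by (simp only: b) (simp add: algebra_simps)
  also have "\<dots> = 4*(4*k+3)*(4*k+2)*((3*k+1)*B1)" by (simp only: c) (simp add: algebra_simps)
  also have "\<dots> = 4*(4*k+1)*(4*k+2)*(4*k+3)*B0" by (simp only: d) (simp add: algebra_simps)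
  finally show ?thesis unfolding A_def B0_def e4 .
qed

lemma nz1: "(of_nat n + 1 :: complex) \<noteq> 0"
proof - have "(of_nat n + 1 :: complex) = of_nat (Suc n)" by simp then show ?thesis by (metis of_nat_eq_0_iff nat.distinct(1)) qed
lemma nz2: "(3 * of_nat n + 1 :: complex) \<noteq> 0"
proof - have "(3 * of_nat n + 1 :: complex) = of_nat (Suc (3*n))" by simp then show ?thesis by (metis of_nat_eq_0_iff nat.distinct(1)) qed
lemma nz3: "(3 * of_nat n + 2 :: complex) \<noteq> 0"
proof - have "(3 * of_nat n + 2 :: complex) = of_nat (Suc (3*n+1))" by simp then show ?thesis by (metis of_nat_eq_0_iff nat.distinct(1)) qed
lemma nz0: "(3*(of_nat k+1)*(3*of_nat k+1)*(3*of_nat k+2) :: complex) \<noteq> 0"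
  by (metis mult_eq_0_iff nz1 nz2 nz3 zero_neq_numeral)

lemma binom4:
  "(of_nat (4*Suc k choose Suc k) :: complex) = 4*(4*of_nat k+1)*(4*of_nat k+2)*(4*of_nat k+3)*of_nat (4*k choose k) / (3*(of_nat k+1)*(3*of_nat k+1)*(3*of_nat k+2))"
proof -
  have "(of_nat (3*(k+1)*(3*k+1)*(3*k+2) * (4*Suc k choose Suc k)) :: complex) = of_nat (4*(4*k+1)*(4*k+2)*(4*k+3)*(4*k choose k))"
    by (simp only: binom4_nat)
  hence e: "3*(of_nat k+1)*(3*of_nat k+1)*(3*of_nat k+2) * (of_nat (4*Suc k choose Suc k) :: complex) = 4*(4*of_nat k+1)*(4*of_nat k+2)*(4*of_nat k+3)*of_nat (4*k choose k)"
    by (simp only: of_nat_mult of_nat_add of_nat_numeral of_nat_1)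
  show ?thesis using nz0[of k] e by (simp add: field_simps)
qed

lemma id1:
  fixes m :: complex assumes m: "m \<noteq> 0"
  shows "(\<Sum>k=0..n. ((256 - 27*m) * of_nat k ^ 3 + 384 * of_nat k ^ 2 + (176 + 21*m) * of_nat k - 6*m + 24)
           * of_nat (4*k choose k) / ((of_nat k + 1) * m ^ k))
        = - 6*m + 8 * (2 * of_nat n + 1) * (4 * of_nat n + 1) * (4 * of_nat n + 3) * of_nat (4*n choose n)
              / ((of_nat n + 1) * m ^ n)"
proof (induction n)
  case 0 then show ?case by (simp add: field_simps)
next
  case (Suc n)
  show ?case
    apply (simp only: sum.atLeast0_atMost_Suc Suc.IH binom4 power_Suc)
    apply (rule frac)
    using m nz1[of n] nz1[of "Suc n"] nz0[of n] apply simp_all[5]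
    unfolding of_nat_Suc by algebra
qed



lemma frac0:
  fixes p C d1 M b n d3 d2 m e :: complex
  assumes "d1\<noteq>0" "d2\<noteq>0" "d3\<noteq>0" "m\<noteq>0" "M\<noteq>0" and h: "p*d2*m*d3 + b*n*d1 = e*n*d1"
  shows "p*C/(d1*M) + b*(n*C/d3)/(d2*(m*M)) = e*(n*C/d3)/(d2*(m*M))"
  using frac[OF assms, of 0] by simp

lemma id2:
  fixes m :: complex assumes m: "m \<noteq> 0"
  shows "(\<Sum>k=0..n. ((256 - 27*m) * of_nat k ^ 3 + 384 * of_nat k ^ 2 + (176 + 3*m) * of_nat k + 24)
           * of_nat (4*k choose k) / ((3 * of_nat k + 1) * m ^ k))
        = 8 * (2 * of_nat n + 1) * (4 * of_nat n + 1) * (4 * of_nat n + 3) * of_nat (4*n choose n)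
              / ((3 * of_nat n + 1) * m ^ n)"
proof (induction n)
  case 0 then show ?case by (simp add: field_simps)
next
  case (Suc n)
  show ?case
    apply (simp only: sum.atLeast0_atMost_Suc Suc.IH binom4 power_Suc)
    apply (rule frac0)
    using m nz2[of n] nz2[of "Suc n"] nz0[of n] apply simp_all[5]
    unfolding of_nat_Suc by algebra
qed

lemma id3:
  fixes m :: complex assumes m: "m \<noteq> 0"
  shows "(\<Sum>k=0..n. ((256 - 27*m) * of_nat k ^ 3 + 3 * (128 - 9*m) * of_nat k ^ 2 + 2 * (88 - 3*m) * of_nat k + 24)
           * of_nat (4*k choose k) / ((3 * of_nat k + 1) * (3 * of_nat k + 2) * m ^ k))
        = 8 * (2 * of_nat n + 1) * (4 * of_nat n + 1) * (4 * of_nat n + 3) * of_nat (4*n choose n)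
              / ((3 * of_nat n + 1) * (3 * of_nat n + 2) * m ^ n)"
proof (induction n)
  case 0 then show ?case by (simp add: field_simps)
next
  case (Suc n)
  have "(3 * of_nat (Suc n) + 1) * (3 * of_nat (Suc n) + 2) \<noteq> (0::complex)"
    using nz2[of "Suc n"] nz3[of "Suc n"] by simp
  show ?case
    apply (simp only: sum.atLeast0_atMost_Suc Suc.IH binom4 power_Suc)
    apply (rule frac0)
    using m nz2[of n] nz3[of n] \<open>(3 * of_nat (Suc n) + 1) * (3 * of_nat (Suc n) + 2) \<noteq> (0::complex)\<close> nz0[of n] apply simp_all[5]
    unfolding of_nat_Suc by algebra
qed

lemma binom_step: "27 * (4*Suc k choose Suc k) \<le> 256 * (4*k choose k)"
proof -
  define Q where "Q = 3*(k+1)*(3*k+1)*(3*k+2)"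
  have Q: "Q > 0" by (simp add: Q_def)
  have p: "27*(4*(4*k+1)*(4*k+2)*(4*k+3)) \<le> 256 * Q"
    unfolding Q_def by (simp add: algebra_simps power2_eq_square power3_eq_cube)
  have "Q * (27 * (4*Suc k choose Suc k)) = 27*(4*(4*k+1)*(4*k+2)*(4*k+3)) * (4*k choose k)"
    using binom4_nat[of k] unfolding Q_def by (simp only: mult_ac)
  also have "\<dots> \<le> 256 * Q * (4*k choose k)" using p by (rule mult_right_mono) simp
  also have "\<dots> = Q * (256 * (4*k choose k))" by (simp only: mult_ac)
  finally show ?thesis using Q by simp
qed

lemma binom_bound: "27^n * (4*n choose n) \<le> 256^n"
proof (induction n)
  case 0 then show ?case by simp
next
  case (Suc n)
  have "27^Suc n * (4*Suc n choose Suc n) = 27^n * (27 * (4*Suc n choose Suc n))" by simp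
  also have "\<dots> \<le> 27^n * (256 * (4*n choose n))" using binom_step[of n] by (rule mult_left_mono) simp
  also have "\<dots> = 256 * (27^n * (4*n choose n))" by (simp only: mult_ac)
  also have "\<dots> \<le> 256 * 256^n" using Suc.IH by simp
  finally show ?case by simp
qed

lemma binom_bound_real: "real (4*n choose n) \<le> (256/27)^n"
proof -
  have "real (27^n * (4*n choose n)) \<le> real (256^n)" using binom_bound[of n] by (rule of_nat_mono)
  hence "27^n * real (4*n choose n) \<le> 256^n" by simp
  thus ?thesis by (simp add: power_divide field_simps)
qed

lemma poly_geom0:
  fixes r :: real assumes "0 < r" "r < 1"
  shows "(\<lambda>n. 8 * (4 * real n + 3)^3 * r^n) \<longlonglongrightarrow> 0"
proof -
  define s where "s = root 3 r"
  have s0: "0 < s" "s < 1" using assms by (simp_all add: s_def)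
  have s3: "s^3 = r" using assms by (simp add: s_def real_root_pow_pos2)
  have a: "(\<lambda>n. of_nat n * s^n) \<longlonglongrightarrow> 0" using s0 by (intro powser_times_n_limit_0) simp
  have b: "(\<lambda>n. s^n) \<longlonglongrightarrow> 0" using s0 by (intro LIMSEQ_power_zero) simp
  have "(\<lambda>n. 4 * (of_nat n * s^n) + 3 * s^n) \<longlonglongrightarrow> 4*0 + 3*0"
    by (intro tendsto_intros a b)
  hence "(\<lambda>n. (4 * (of_nat n * s^n) + 3 * s^n)^3) \<longlonglongrightarrow> (4*0+3*0)^3"
    by (rule tendsto_power)
  hence "(\<lambda>n. 8 * (4 * (of_nat n * s^n) + 3 * s^n)^3) \<longlonglongrightarrow> 8 * (4*0+3*0)^3"
    by (rule tendsto_mult_left)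
  moreover have "8 * (4 * (of_nat n * s^n) + 3 * s^n)^3 = 8 * (4 * real n + 3)^3 * r^n" for n
  proof -
    have "(4 * (of_nat n * s^n) + 3 * s^n)^3 = (4 * real n + 3)^3 * (s^n)^3"
      by (simp add: algebra_simps power_mult_distrib[symmetric])
    also have "(s^n)^3 = r^n" by (simp add: s3 power_mult[symmetric] mult.commute[of n] power_mult)
    finally show ?thesis by simp
  qed
  ultimately show ?thesis by simp
qed

lemma tail0:
  fixes m :: complex and q :: "nat \<Rightarrow> complex"
  assumes m: "norm m > 256/27" and q: "\<And>n. norm (q n) \<ge> 1"
  shows "(\<lambda>n. 8 * (2 * of_nat n + 1) * (4 * of_nat n + 1) * (4 * of_nat n + 3) * of_nat (4*n choose n)
              / (q n * m ^ n)) \<longlonglongrightarrow> 0"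
proof -
  define r where "r = 256 / (27 * norm m)"
  have m0: "norm m > 0" using m by linarith
  have r: "0 < r" "r < 1" using m m0 by (simp_all add: r_def field_simps)
  show ?thesis
  proof (rule tendsto_0_le[OF poly_geom0[OF r], where K=1], intro always_eventually allI)
    fix n
    define P where "P = 8 * (2 * real n + 1) * (4 * real n + 1) * (4 * real n + 3)"
    have P0: "P \<ge> 0" by (simp add: P_def)
    have "(8 * (2 * of_nat n + 1) * (4 * of_nat n + 1) * (4 * of_nat n + 3) * of_nat (4*n choose n) :: complex)
       = of_real (P * real (4*n choose n))" by (simp add: P_def)
    hence "norm (8 * (2 * of_nat n + 1) * (4 * of_nat n + 1) * (4 * of_nat n + 3) * of_nat (4*n choose n)
              / (q n * m ^ n)) = P * real (4*n choose n) / (norm (q n) * norm m ^ n)"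
      using P0 by (simp add: norm_divide norm_mult norm_power)
    also have "\<dots> \<le> P * real (4*n choose n) / (norm m ^ n)"
    proof (rule divide_left_mono)
      have mn: "norm m ^ n > 0" using m0 by simp
      show "norm m ^ n \<le> norm (q n) * norm m ^ n" using q[of n] mn by simp
      show "0 \<le> P * real (4*n choose n)" using P0 by simp
      show "0 < norm (q n) * norm m ^ n * norm m ^ n" using q[of n] mn by (intro mult_pos_pos; linarith)
    qed
    also have "\<dots> \<le> P * (256/27)^n / (norm m ^ n)"
      using P0 m0 binom_bound_real[of n] by (intro divide_right_mono mult_left_mono) auto
    also have "\<dots> = P * r^n" using m0 by (simp add: r_def power_divide power_mult_distrib)
    also have "\<dots> \<le> 8 * (4 * real n + 3)^3 * r^n"
    proof (rule mult_right_mono)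
      show "P \<le> 8 * (4 * real n + 3)^3"
        unfolding P_def by (simp add: algebra_simps power3_eq_cube power2_eq_square)
      show "0 \<le> r^n" using r by simp
    qed
    also have "\<dots> = norm (8 * (4 * real n + 3)^3 * r^n) * 1" using r by simp
    finally show "norm (8 * (2 * of_nat n + 1) * (4 * of_nat n + 1) * (4 * of_nat n + 3) * of_nat (4*n choose n)
              / (q n * m ^ n)) \<le> norm (8 * (4 * real n + 3)^3 * r^n) * 1" .
  qed
qed

theorem lemma3p6:
  fixes m :: complex
  assumes "m \<noteq> 0"
  shows "(\<forall>n::nat.
      (\<Sum>k=0..n. ((256 - 27*m) * of_nat k ^ 3 + 384 * of_nat k ^ 2 + (176 + 21*m) * of_nat k - 6*m + 24)
           * of_nat (4*k choose k) / ((of_nat k + 1) * m ^ k))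
        = - 6*m + 8 * (2 * of_nat n + 1) * (4 * of_nat n + 1) * (4 * of_nat n + 3) * of_nat (4*n choose n)
              / ((of_nat n + 1) * m ^ n)
    \<and> (\<Sum>k=0..n. ((256 - 27*m) * of_nat k ^ 3 + 384 * of_nat k ^ 2 + (176 + 3*m) * of_nat k + 24)
           * of_nat (4*k choose k) / ((3 * of_nat k + 1) * m ^ k))
        = 8 * (2 * of_nat n + 1) * (4 * of_nat n + 1) * (4 * of_nat n + 3) * of_nat (4*n choose n)
              / ((3 * of_nat n + 1) * m ^ n)
    \<and> (\<Sum>k=0..n. ((256 - 27*m) * of_nat k ^ 3 + 3 * (128 - 9*m) * of_nat k ^ 2 + 2 * (88 - 3*m) * of_nat k + 24)
           * of_nat (4*k choose k) / ((3 * of_nat k + 1) * (3 * of_nat k + 2) * m ^ k))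
        = 8 * (2 * of_nat n + 1) * (4 * of_nat n + 1) * (4 * of_nat n + 3) * of_nat (4*n choose n)
              / ((3 * of_nat n + 1) * (3 * of_nat n + 2) * m ^ n))
    \<and> (norm m > 256 / 27 \<longrightarrow>
        ((\<lambda>k. ((256 - 27*m) * of_nat k ^ 3 + 384 * of_nat k ^ 2 + (176 + 21*m) * of_nat k - 6*m + 24)
           * of_nat (4*k choose k) / ((of_nat k + 1) * m ^ k)) sums (- 6*m))
      \<and> ((\<lambda>k. ((256 - 27*m) * of_nat k ^ 3 + 384 * of_nat k ^ 2 + (176 + 3*m) * of_nat k + 24)
           * of_nat (4*k choose k) / ((3 * of_nat k + 1) * m ^ k)) sums 0)
      \<and> ((\<lambda>k. ((256 - 27*m) * of_nat k ^ 3 + 3 * (128 - 9*m) * of_nat k ^ 2 + 2 * (88 - 3*m) * of_nat k + 24)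
           * of_nat (4*k choose k) / ((3 * of_nat k + 1) * (3 * of_nat k + 2) * m ^ k)) sums 0))"
  proof (intro conjI allI impI)
  fix n
  show "(\<Sum>k=0..n. ((256 - 27*m) * of_nat k ^ 3 + 384 * of_nat k ^ 2 + (176 + 21*m) * of_nat k - 6*m + 24)
           * of_nat (4*k choose k) / ((of_nat k + 1) * m ^ k))
        = - 6*m + 8 * (2 * of_nat n + 1) * (4 * of_nat n + 1) * (4 * of_nat n + 3) * of_nat (4*n choose n)
              / ((of_nat n + 1) * m ^ n)" by (rule id1[OF assms])
  show "(\<Sum>k=0..n. ((256 - 27*m) * of_nat k ^ 3 + 384 * of_nat k ^ 2 + (176 + 3*m) * of_nat k + 24)
           * of_nat (4*k choose k) / ((3 * of_nat k + 1) * m ^ k))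
        = 8 * (2 * of_nat n + 1) * (4 * of_nat n + 1) * (4 * of_nat n + 3) * of_nat (4*n choose n)
              / ((3 * of_nat n + 1) * m ^ n)" by (rule id2[OF assms])
  show "(\<Sum>k=0..n. ((256 - 27*m) * of_nat k ^ 3 + 3 * (128 - 9*m) * of_nat k ^ 2 + 2 * (88 - 3*m) * of_nat k + 24)
           * of_nat (4*k choose k) / ((3 * of_nat k + 1) * (3 * of_nat k + 2) * m ^ k))
        = 8 * (2 * of_nat n + 1) * (4 * of_nat n + 1) * (4 * of_nat n + 3) * of_nat (4*n choose n)
              / ((3 * of_nat n + 1) * (3 * of_nat n + 2) * m ^ n)" by (rule id3[OF assms])
next
  assume m: "norm m > 256/27"
  have q1: "norm (of_nat n + 1 :: complex) \<ge> 1" for n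
  proof - have "(of_nat n + 1 :: complex) = of_nat (n+1)" by simp thus ?thesis by (simp only: norm_of_nat; simp) qed
  have q2: "norm (3 * of_nat n + 1 :: complex) \<ge> 1" for n
  proof - have "(3 * of_nat n + 1 :: complex) = of_nat (3*n+1)" by simp thus ?thesis by (simp only: norm_of_nat; simp) qed
  have q3: "norm ((3 * of_nat n + 1) * (3 * of_nat n + 2) :: complex) \<ge> 1" for n
  proof - have "((3 * of_nat n + 1) * (3 * of_nat n + 2) :: complex) = of_nat ((3*n+1)*(3*n+2))" by (simp only: of_nat_mult of_nat_add of_nat_numeral of_nat_1)
    moreover have "(1::nat) \<le> (3*n+1)*(3*n+2)" by simp
    ultimately show ?thesis by (simp only: norm_of_nat; simp) qed
  show "(\<lambda>k. ((256 - 27*m) * of_nat k ^ 3 + 384 * of_nat k ^ 2 + (176 + 21*m) * of_nat k - 6*m + 24)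
           * of_nat (4*k choose k) / ((of_nat k + 1) * m ^ k)) sums (- 6*m)"
    unfolding sums_def_le atMost_atLeast0 id1[OF assms]
    using tendsto_add[OF tendsto_const[of "-6*m"] tail0[OF m q1]] by simp
  show "(\<lambda>k. ((256 - 27*m) * of_nat k ^ 3 + 384 * of_nat k ^ 2 + (176 + 3*m) * of_nat k + 24)
           * of_nat (4*k choose k) / ((3 * of_nat k + 1) * m ^ k)) sums 0"
    unfolding sums_def_le atMost_atLeast0 id2[OF assms]
    using tail0[OF m q2] .
  show "(\<lambda>k. ((256 - 27*m) * of_nat k ^ 3 + 3 * (128 - 9*m) * of_nat k ^ 2 + 2 * (88 - 3*m) * of_nat k + 24)
           * of_nat (4*k choose k) / ((3 * of_nat k + 1) * (3 * of_nat k + 2) * m ^ k)) sums 0"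
    unfolding sums_def_le atMost_atLeast0 id3[OF assms]
    using tail0[OF m q3] .
qed

end
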